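(* Let $G$ be a graph on $n$ vertices with at least one edge that is both vertex-transitive and edge-transitive, and let $\lambda_1(G)$ and $\lambda_n(G)$ be the largest and smallest eigenvalues of its adjacency matrix. Then $\chi_v(G)=1-\frac{\lambda_1(G)}{\lambda_n(G)}=\chi_{sv}(G)$.
   Context: Graphs are finite, simple, undirected. Vertex-/edge-transitive means the automorphism group acts transitively on vertices/edges. For a graph on $n$ vertices with at least one edge, a vector $t$-coloring ($t\ge2$) assigns unit vectors $u_i\in\mathbb R^n$ to vertices with $u_i^{\mathrm T}u_j\le-\frac1{t-1}$ for every edge $\{i,j\}$, and a strict vector $t$-coloring requires equality on every edge; $\chi_v$ and $\chi_{sv}$ are the smallest $t\ge2$ admitting a vector, resp. strict vector, $t$-coloring. *)

theory Defs
  imports "HOL-Analysis.Analysis"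
begin

text \<open>A finite simple graph whose vertex set is the finite type 'a (so n = CARD('a)),
  given by a symmetric irreflexive adjacency relation E.\<close>

definition simple_graph :: "('a::finite \<Rightarrow> 'a \<Rightarrow> bool) \<Rightarrow> bool" where
  "simple_graph E \<longleftrightarrow> (\<forall>x y. E x y \<longrightarrow> E y x) \<and> (\<forall>x. \<not> E x x)"

definition graph_aut :: "('a \<Rightarrow> 'a \<Rightarrow> bool) \<Rightarrow> ('a \<Rightarrow> 'a) \<Rightarrow> bool" where
  "graph_aut E f \<longleftrightarrow> bij f \<and> (\<forall>x y. E x y \<longleftrightarrow> E (f x) (f y))"

definition vertex_transitive :: "('a \<Rightarrow> 'a \<Rightarrow> bool) \<Rightarrow> bool" where
  "vertex_transitive E \<longleftrightarrow> (\<forall>x y. \<exists>f. graph_aut E f \<and> f x = y)"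

definition edge_transitive :: "('a \<Rightarrow> 'a \<Rightarrow> bool) \<Rightarrow> bool" where
  "edge_transitive E \<longleftrightarrow>
     (\<forall>x y u v. E x y \<longrightarrow> E u v \<longrightarrow> (\<exists>f. graph_aut E f \<and> {f x, f y} = {u, v}))"

definition adj_matrix :: "('a::finite \<Rightarrow> 'a \<Rightarrow> bool) \<Rightarrow> real^'a^'a" where
  "adj_matrix E = (\<chi> i j. if E i j then 1 else 0)"

definition eigenvalues :: "real^'n^'n \<Rightarrow> real set" where
  "eigenvalues A = {c. \<exists>v. v \<noteq> 0 \<and> A *v v = c *\<^sub>R v}"

definition lambda_max :: "('a::finite \<Rightarrow> 'a \<Rightarrow> bool) \<Rightarrow> real" where
  "lambda_max E = Max (eigenvalues (adj_matrix E))"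

definition lambda_min :: "('a::finite \<Rightarrow> 'a \<Rightarrow> bool) \<Rightarrow> real" where
  "lambda_min E = Min (eigenvalues (adj_matrix E))"

definition vector_coloring :: "('a::finite \<Rightarrow> 'a \<Rightarrow> bool) \<Rightarrow> real \<Rightarrow> ('a \<Rightarrow> real^'a) \<Rightarrow> bool" where
  "vector_coloring E t u \<longleftrightarrow> (\<forall>i. norm (u i) = 1) \<and>
     (\<forall>i j. E i j \<longrightarrow> u i \<bullet> u j \<le> - 1 / (t - 1))"

definition strict_vector_coloring :: "('a::finite \<Rightarrow> 'a \<Rightarrow> bool) \<Rightarrow> real \<Rightarrow> ('a \<Rightarrow> real^'a) \<Rightarrow> bool" where
  "strict_vector_coloring E t u \<longleftrightarrow> (\<forall>i. norm (u i) = 1) \<and>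
     (\<forall>i j. E i j \<longrightarrow> u i \<bullet> u j = - 1 / (t - 1))"

definition vector_chromatic :: "('a::finite \<Rightarrow> 'a \<Rightarrow> bool) \<Rightarrow> real" where
  "vector_chromatic E = Inf {t. t \<ge> 2 \<and> (\<exists>u. vector_coloring E t u)}"

definition strict_vector_chromatic :: "('a::finite \<Rightarrow> 'a \<Rightarrow> bool) \<Rightarrow> real" where
  "strict_vector_chromatic E = Inf {t. t \<ge> 2 \<and> (\<exists>u. strict_vector_coloring E t u)}"

end

theory Submission
  imports Defs
begin


definition aw :: "('a \<Rightarrow> 'a \<Rightarrow> bool) \<Rightarrow> 'a \<Rightarrow> 'a \<Rightarrow> real" where
  "aw E i j = (if E i j then 1 else 0)"

definition Qf :: "('a::finite \<Rightarrow> 'a \<Rightarrow> bool) \<Rightarrow> real^'a \<Rightarrow> real" where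
  "Qf E x = (\<Sum>i\<in>UNIV. \<Sum>j\<in>UNIV. aw E i j * (x$i * x$j))"

lemma adj_mult: "(adj_matrix E *v x) $ i = (\<Sum>j\<in>UNIV. aw E i j * x$j)"
  by (simp add: adj_matrix_def matrix_vector_mult_def aw_def)

lemma inner_adj: "y \<bullet> (adj_matrix E *v x) = (\<Sum>i\<in>UNIV. \<Sum>j\<in>UNIV. aw E i j * (y$i * x$j))"
  by (simp add: inner_vec_def adj_mult sum_distrib_left algebra_simps)

lemma Qf_inner: "x \<bullet> (adj_matrix E *v x) = Qf E x"
  by (simp add: inner_adj Qf_def)

lemma aw_sym: "simple_graph E \<Longrightarrow> aw E i j = aw E j i"
  unfolding simple_graph_def aw_def by auto

lemma inner_adj_sym:
  assumes "simple_graph E"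
  shows "y \<bullet> (adj_matrix E *v x) = x \<bullet> (adj_matrix E *v y)"
proof -
  have "y \<bullet> (adj_matrix E *v x) = (\<Sum>i\<in>UNIV. \<Sum>j\<in>UNIV. aw E i j * (y$i * x$j))" by (rule inner_adj)
  also have "\<dots> = (\<Sum>j\<in>UNIV. \<Sum>i\<in>UNIV. aw E i j * (y$i * x$j))" by (rule sum.swap)
  also have "\<dots> = (\<Sum>j\<in>UNIV. \<Sum>i\<in>UNIV. aw E j i * (x$j * y$i))"
    using aw_sym[OF assms] by (simp add: mult.commute)
  also have "\<dots> = x \<bullet> (adj_matrix E *v y)" by (simp add: inner_adj)
  finally show ?thesis .
qed

lemma eigen_finite:
  assumes "simple_graph E"
  shows "finite (eigenvalues (adj_matrix E))"
proof -
  let ?A = "adj_matrix E"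
  define ev where "ev c = (SOME v. v \<noteq> 0 \<and> ?A *v v = c *\<^sub>R v)" for c
  have ev: "ev c \<noteq> 0 \<and> ?A *v ev c = c *\<^sub>R ev c" if "c \<in> eigenvalues ?A" for c
    using that unfolding eigenvalues_def ev_def by (metis (mono_tags, lifting) mem_Collect_eq someI_ex)
  have orth: "ev c \<bullet> ev c' = 0" if "c \<in> eigenvalues ?A" "c' \<in> eigenvalues ?A" "c \<noteq> c'" for c c'
  proof -
    have "c * (ev c \<bullet> ev c') = ev c' \<bullet> (?A *v ev c)" using ev[OF that(1)] by (simp add: inner_commute)
    also have "\<dots> = ev c \<bullet> (?A *v ev c')" by (rule inner_adj_sym[OF assms])
    also have "\<dots> = c' * (ev c \<bullet> ev c')" using ev[OF that(2)] by simp
    finally show ?thesis using that(3) by auto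
  qed
  have inj: "inj_on ev (eigenvalues ?A)"
  proof (rule inj_onI)
    fix c c' assume h: "c \<in> eigenvalues ?A" "c' \<in> eigenvalues ?A" "ev c = ev c'"
    show "c = c'"
    proof (rule ccontr)
      assume "c \<noteq> c'"
      then have "ev c \<bullet> ev c = 0" using orth[OF h(1,2)] h(3) by simp
      then show False using ev[OF h(1)] by simp
    qed
  qed
  have "pairwise orthogonal (ev ` eigenvalues ?A)"
    unfolding pairwise_def orthogonal_def using orth by blast
  moreover have "0 \<notin> ev ` eigenvalues ?A" using ev by auto
  ultimately have "independent (ev ` eigenvalues ?A)" by (rule pairwise_orthogonal_independent)
  then have "finite (ev ` eigenvalues ?A)" by (rule finiteI_independent)
  then show ?thesis using inj finite_imageD by blast
qed

lemma quad_zero: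
  fixes bb q :: real
  assumes "\<And>s. 0 \<le> 2 * s * bb + s^2 * q" "q \<ge> 0"
  shows "bb = 0"
proof -
  define s where "s = -bb/(q+1)"
  have sq: "s * (q+1) = -bb" using assms(2) by (simp add: s_def)
  have "0 \<le> 2 * s * bb + s^2 * q" by (rule assms(1))
  then have "0 \<le> (2 * s * bb + s^2 * q) * (q+1)^2" using assms(2) by simp
  also have "\<dots> = 2 * (s * (q+1)) * bb * (q+1) + (s*(q+1))^2 * q" by (simp add: algebra_simps power2_eq_square)
  also have "\<dots> = -(bb^2 * (q + 2))" unfolding sq by (simp add: algebra_simps power2_eq_square)
  finally have "bb^2 * (q+2) \<le> 0" by simp
  then have "bb^2 \<le> 0" using assms(2) by (smt (verit) mult_pos_pos zero_less_power2)
  then show ?thesis by simp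
qed

lemma Qf_scale: "Qf E (c *\<^sub>R x) = c^2 * Qf E x"
  by (simp add: Qf_def sum_distrib_left algebra_simps power2_eq_square)

lemma Qf_cont: "continuous_on S (Qf E)"
  unfolding Qf_def by (intro continuous_intros)

lemma rayleigh_min:
  obtains x0 :: "real^'a::finite" where "norm x0 = 1" "\<And>x. Qf E x \<ge> Qf E x0 * (norm x)^2"
proof -
  have "sphere (0::real^'a) 1 \<noteq> {}" by simp
  then obtain x0 :: "real^'a" where x0: "x0 \<in> sphere 0 1" "\<And>y. y \<in> sphere 0 1 \<Longrightarrow> Qf E x0 \<le> Qf E y"
    using continuous_attains_inf[OF compact_sphere _ Qf_cont] by blast
  have "Qf E x \<ge> Qf E x0 * (norm x)^2" for x
  proof (cases "x = 0")
    case True then show ?thesis by (simp add: Qf_def)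
  next
    case False
    then have "(1/norm x) *\<^sub>R x \<in> sphere 0 1" by simp
    then have "Qf E x0 \<le> (1/norm x)^2 * Qf E x" using x0(2) Qf_scale by metis
    then have "Qf E x0 * (norm x)^2 \<le> (1/norm x)^2 * Qf E x * (norm x)^2"
      by (simp add: mult_right_mono)
    also have "\<dots> = Qf E x" using False by (simp add: field_simps)
    finally show ?thesis .
  qed
  moreover have "norm x0 = 1" using x0 by simp
  ultimately show ?thesis using that by blast
qed

lemma rayleigh_eigen:
  fixes x0 :: "real^'a::finite"
  assumes sg: "simple_graph E" and n1: "norm x0 = 1" and mn: "\<And>x. Qf E x \<ge> Qf E x0 * (norm x)^2"
  shows "adj_matrix E *v x0 = Qf E x0 *\<^sub>R x0"
proof -
  let ?A = "adj_matrix E" and ?m = "Qf E x0"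
  define r where "r = ?A *v x0 - ?m *\<^sub>R x0"
  define q where "q = Qf E r - ?m * (norm r)^2"
  have q0: "q \<ge> 0" using mn[of r] by (simp add: q_def)
  have "0 \<le> 2 * s * (r \<bullet> r) + s^2 * q" for s
  proof -
    let ?z = "x0 + s *\<^sub>R r"
    have "Qf E ?z = ?z \<bullet> (?A *v ?z)" by (simp add: Qf_inner)
    also have "\<dots> = x0 \<bullet> (?A *v x0) + s * (r \<bullet> (?A *v x0)) + s * (x0 \<bullet> (?A *v r)) + s^2 * (r \<bullet> (?A *v r))"
      by (simp add: algebra_simps inner_add_left inner_add_right power2_eq_square)
    also have "\<dots> = ?m + 2 * s * (r \<bullet> (?A *v x0)) + s^2 * Qf E r"
      using inner_adj_sym[OF sg, of x0 r] by (simp add: Qf_inner)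
    finally have 1: "Qf E ?z = ?m + 2 * s * (r \<bullet> (?A *v x0)) + s^2 * Qf E r" .
    have "(norm ?z)^2 = ?z \<bullet> ?z" by (simp add: power2_norm_eq_inner)
    also have "\<dots> = x0 \<bullet> x0 + 2 * s * (r \<bullet> x0) + s^2 * (r \<bullet> r)"
      by (simp add: algebra_simps inner_add_left inner_add_right power2_eq_square inner_commute)
    also have "\<dots> = 1 + 2 * s * (r \<bullet> x0) + s^2 * (norm r)^2"
      using n1 by (simp add: power2_norm_eq_inner[symmetric])
    finally have 2: "(norm ?z)^2 = 1 + 2 * s * (r \<bullet> x0) + s^2 * (norm r)^2" .
    have "?m * (norm ?z)^2 \<le> Qf E ?z" by (rule mn)
    then have "0 \<le> 2 * s * (r \<bullet> (?A *v x0) - ?m * (r \<bullet> x0)) + s^2 * q"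
      unfolding 1 2 q_def by (simp add: algebra_simps)
    moreover have "r \<bullet> (?A *v x0) - ?m * (r \<bullet> x0) = r \<bullet> r"
      by (simp add: r_def inner_diff_right)
    ultimately show ?thesis by simp
  qed
  then have "r \<bullet> r = 0" using quad_zero q0 by blast
  then show ?thesis by (simp add: r_def)
qed

lemma sum_aw: fixes E :: "'a::finite \<Rightarrow> 'a \<Rightarrow> bool" shows "(\<Sum>j\<in>UNIV. aw E i j) = real (card {j. E i j})"
proof -
  have "(\<Sum>j\<in>UNIV. aw E i j) = (\<Sum>j\<in>{j\<in>UNIV. E i j}. 1)"
    using sum.inter_restrict[of UNIV "\<lambda>j. (1::real)" "{j. E i j}"] by (simp add: aw_def)
  then show ?thesis by simp
qed

lemma sum_aw2: fixes E :: "'a::finite \<Rightarrow> 'a \<Rightarrow> bool" shows "simple_graph E \<Longrightarrow> (\<Sum>i\<in>UNIV. aw E i j) = real (card {i. E j i})"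
  using aw_sym[of E] sum_aw[of E j] by simp

lemma regular:
  assumes vt: "vertex_transitive E"
  shows "card {j. E i j} = card {j. E k j}"
proof -
  obtain f where f: "graph_aut E f" "f i = k" using vt unfolding vertex_transitive_def by blast
  then have b: "bij f" and e: "\<And>x y. E x y \<longleftrightarrow> E (f x) (f y)" unfolding graph_aut_def by auto
  have "f ` {j. E i j} = {j. E k j}"
  proof
    show "f ` {j. E i j} \<subseteq> {j. E k j}" using e f(2) by auto
    show "{j. E k j} \<subseteq> f ` {j. E i j}"
    proof
      fix j assume "j \<in> {j. E k j}"
      then have "E (f i) (f (inv f j))" using f(2) b by (simp add: surj_f_inv_f bij_is_surj)
      then have "E i (inv f j)" using e by blast
      moreover have "j = f (inv f j)" using surj_f_inv_f[OF bij_is_surj[OF b]] by metis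
      ultimately show "j \<in> f ` {j. E i j}" by blast
    qed
  qed
  moreover have "inj_on f {j. E i j}" using b bij_is_inj inj_on_subset by blast
  ultimately show ?thesis using card_image by metis
qed

lemma norm_sq: "(norm x)^2 = (\<Sum>i\<in>UNIV. (x$i)^2)"
  unfolding power2_norm_eq_inner by (simp add: inner_vec_def power2_eq_square)

lemma half_aux: fixes a b :: real shows "-(2 * (a * b)) \<le> a^2 + b^2 \<Longrightarrow> -((a^2 + b^2)/2) \<le> a * b"
  by (simp add: field_simps)

lemma Qf_bounds:
  assumes sg: "simple_graph E" and reg: "\<And>i. card {j. E i j} = d"
  shows "Qf E x \<le> real d * (norm x)^2" "- (real d * (norm x)^2) \<le> Qf E x"
proof -
  have S1: "(\<Sum>i\<in>UNIV. \<Sum>j\<in>UNIV. aw E i j * (x$i)^2) = d * (norm x)^2"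
    by (simp add: norm_sq sum_distrib_left sum_distrib_right[symmetric] sum_aw reg mult.commute)
  have "(\<Sum>i\<in>UNIV. \<Sum>j\<in>UNIV. aw E i j * (x$j)^2) = (\<Sum>j\<in>UNIV. \<Sum>i\<in>UNIV. aw E i j * (x$j)^2)"
    by (rule sum.swap)
  also have "\<dots> = d * (norm x)^2"
    by (simp add: norm_sq sum_distrib_left sum_distrib_right[symmetric] sum_aw2[OF sg] reg mult.commute)
  finally have S2: "(\<Sum>i\<in>UNIV. \<Sum>j\<in>UNIV. aw E i j * (x$j)^2) = d * (norm x)^2" .
  have aw0: "aw E i j \<ge> 0" for i j by (simp add: aw_def)
  have p1: "aw E i j * (x$i * x$j) \<le> (aw E i j * (x$i)^2 + aw E i j * (x$j)^2)/2" for i j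
  proof -
    have "0 \<le> (x$i - x$j)^2" by simp
    then have "2 * (x$i * x$j) \<le> (x$i)^2 + (x$j)^2" unfolding power2_diff mult.assoc by linarith
    then have "x$i * x$j \<le> ((x$i)^2 + (x$j)^2)/2" by simp
    then show ?thesis by (cases "E i j") (simp_all add: aw_def)
  qed
  have p2: "aw E i j * (x$i * x$j) \<ge> -((aw E i j * (x$i)^2 + aw E i j * (x$j)^2)/2)" for i j
  proof -
    have "0 \<le> (x$i + x$j)^2" by simp
    then have "-(2 * (x$i * x$j)) \<le> (x$i)^2 + (x$j)^2" unfolding power2_sum mult.assoc by linarith
    then have "x$i * x$j \<ge> -(((x$i)^2 + (x$j)^2)/2)" by (rule half_aux)
    then show ?thesis by (cases "E i j") (simp_all add: aw_def)
  qed
  have Pos: "(\<Sum>i\<in>UNIV. \<Sum>j\<in>UNIV. (aw E i j * (x$i)^2 + aw E i j * (x$j)^2)/2) = d * (norm x)^2"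
    using S1 S2 by (simp add: sum.distrib sum_divide_distrib[symmetric])
  have "Qf E x \<le> (\<Sum>i\<in>UNIV. \<Sum>j\<in>UNIV. (aw E i j * (x$i)^2 + aw E i j * (x$j)^2)/2)"
    unfolding Qf_def by (intro sum_mono p1)
  then show "Qf E x \<le> real d * (norm x)^2" using Pos by simp
  have "Qf E x \<ge> (\<Sum>i\<in>UNIV. \<Sum>j\<in>UNIV. -((aw E i j * (x$i)^2 + aw E i j * (x$j)^2)/2))"
    unfolding Qf_def by (intro sum_mono p2)
  moreover have "(\<Sum>i\<in>UNIV. \<Sum>j\<in>UNIV. -((aw E i j * (x$i)^2 + aw E i j * (x$j)^2)/2)) = - (real d * (norm x)^2)"
    unfolding sum_negf Pos by simp
  ultimately show "- (real d * (norm x)^2) \<le> Qf E x" by simp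
qed

lemma axis_adj: "axis i 1 \<bullet> (adj_matrix E *v axis j 1) = aw E i j"
proof -
  have "axis i 1 \<bullet> (adj_matrix E *v axis j 1) = (adj_matrix E *v axis j 1) $ i"
    by (simp add: inner_axis')
  also have "\<dots> = (\<Sum>l\<in>UNIV. aw E i l * axis j 1 $ l)" by (rule adj_mult)
  also have "\<dots> = (\<Sum>l\<in>UNIV. if l = j then aw E i l else 0)"
    by (intro sum.cong) (auto simp: axis_def)
  also have "\<dots> = aw E i j" by simp
  finally show ?thesis .
qed

lemma Qf_edge:
  assumes sg: "simple_graph E" and "E i j"
  shows "Qf E (axis i 1 - axis j 1) = -2" "(norm (axis i 1 - axis j 1 :: real^'a::finite))^2 = 2"
proof -
  have ij: "i \<noteq> j" using assms unfolding simple_graph_def by auto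
  have "Qf E (axis i 1 - axis j 1) = (axis i 1 - axis j 1) \<bullet> (adj_matrix E *v (axis i 1 - axis j 1))"
    by (simp add: Qf_inner)
  also have "\<dots> = aw E i i - aw E i j - aw E j i + aw E j j"
    by (simp add: matrix_vector_mult_diff_distrib inner_diff_left inner_diff_right axis_adj)
  also have "\<dots> = -2" using assms unfolding aw_def simple_graph_def by auto
  finally show "Qf E (axis i 1 - axis j 1) = -2" .
  show "(norm (axis i 1 - axis j 1 :: real^'a::finite))^2 = 2"
    using ij by (simp add: power2_norm_eq_inner inner_diff_left inner_diff_right inner_axis_axis)
qed

lemma Qf_eig:
  assumes "adj_matrix E *v v = c *\<^sub>R v"
  shows "Qf E v = c * (norm v)^2"
  using assms by (simp add: Qf_inner[symmetric] power2_norm_eq_inner)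

lemma spectral:
  fixes E :: "'a::finite \<Rightarrow> 'a \<Rightarrow> bool"
  assumes sg: "simple_graph E" and ed: "\<exists>x y. E x y" and vt: "vertex_transitive E"
  obtains d x0 where "\<And>i. card {j. E i j} = d" "d \<ge> 1" "norm x0 = 1"
    "\<And>x. Qf E x \<ge> Qf E x0 * (norm x)^2"
    "lambda_min E = Qf E x0" "lambda_max E = real d" "Qf E x0 \<le> -1" "Qf E x0 \<ge> - real d"
proof -
  obtain a b where ab: "E a b" using ed by blast
  define d where "d = card {j. E a j}"
  have reg: "card {j. E i j} = d" for i unfolding d_def using regular[OF vt] by blast
  have "{j. E a j} \<noteq> {}" using ab by blast
  then have d1: "d \<ge> 1" unfolding d_def by (simp add: Suc_leI card_gt_0_iff)
  obtain x0 :: "real^'a" where n1: "norm x0 = 1" and mn: "\<And>x. Qf E x \<ge> Qf E x0 * (norm x)^2"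
    using rayleigh_min by blast
  let ?m = "Qf E x0"
  have fin: "finite (eigenvalues (adj_matrix E))" by (rule eigen_finite[OF sg])
  have "x0 \<noteq> 0" using n1 by auto
  then have m_in: "?m \<in> eigenvalues (adj_matrix E)"
    using rayleigh_eigen[OF sg n1 mn] unfolding eigenvalues_def by blast
  have m_le: "?m \<le> c" if "c \<in> eigenvalues (adj_matrix E)" for c
  proof -
    have "\<exists>v. v \<noteq> 0 \<and> adj_matrix E *v v = c *\<^sub>R v" using that by (simp add: eigenvalues_def)
    then obtain v where vv: "v \<noteq> 0 \<and> adj_matrix E *v v = c *\<^sub>R v" by (rule exE)
    note v = conjunct1[OF vv] conjunct2[OF vv]
    have "?m * (norm v)^2 \<le> c * (norm v)^2" using mn[of v] unfolding Qf_eig[OF v(2)] .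
    moreover have "(norm v)^2 > 0" using v by simp
    ultimately show ?thesis by (rule mult_right_le_imp_le)
  qed
  have lmin: "lambda_min E = ?m" unfolding lambda_min_def using fin m_in m_le by (intro Min_eqI) auto
  define one :: "real^'a" where "one = (\<chi> i. 1)"
  have "adj_matrix E *v one = real d *\<^sub>R one"
    by (simp add: vec_eq_iff adj_mult one_def sum_aw reg)
  moreover have "one \<noteq> 0" by (simp add: one_def vec_eq_iff)
  ultimately have d_in: "real d \<in> eigenvalues (adj_matrix E)" unfolding eigenvalues_def by blast
  have d_ge: "c \<le> real d" if "c \<in> eigenvalues (adj_matrix E)" for c
  proof -
    have "\<exists>v. v \<noteq> 0 \<and> adj_matrix E *v v = c *\<^sub>R v" using that by (simp add: eigenvalues_def)
    then obtain v where vv: "v \<noteq> 0 \<and> adj_matrix E *v v = c *\<^sub>R v" by (rule exE)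
    note v = conjunct1[OF vv] conjunct2[OF vv]
    have "c * (norm v)^2 \<le> real d * (norm v)^2" using Qf_bounds(1)[OF sg reg, of v] unfolding Qf_eig[OF v(2)] .
    moreover have "(norm v)^2 > 0" using v by simp
    ultimately show ?thesis by (rule mult_right_le_imp_le)
  qed
  have lmax: "lambda_max E = real d" unfolding lambda_max_def using fin d_in d_ge by (intro Max_eqI) auto
  have "?m * 2 \<le> -2" using mn[of "axis a 1 - axis b 1"] Qf_edge[OF sg ab] by simp
  then have m1: "?m \<le> -1" by simp
  have md: "?m \<ge> - real d" using Qf_bounds(2)[OF sg reg, of x0] n1 by simp
  show ?thesis by (rule that[OF reg d1 n1 mn lmin lmax m1 md])
qed



lemma lower_bound:
  fixes E :: "'a::finite \<Rightarrow> 'a \<Rightarrow> bool" and m :: real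
  assumes reg: "\<And>i. card {j. E i j} = d"
    and mn: "\<And>x. Qf E x \<ge> m * (norm x)^2"
    and vc: "vector_coloring E t u"
  shows "m * CARD('a) \<le> (- 1 / (t - 1)) * (CARD('a) * real d)"
proof -
  let ?w = "- 1 / (t - 1)"
  have nu: "norm (u i) = 1" and ed: "\<And>i j. E i j \<Longrightarrow> u i \<bullet> u j \<le> ?w" for i
    using vc unfolding vector_coloring_def by auto
  define y where "y k = (\<chi> i. u i $ k)" for k
  have "(\<Sum>i\<in>UNIV. \<Sum>j\<in>UNIV. aw E i j * (u i \<bullet> u j)) = (\<Sum>i\<in>UNIV. \<Sum>j\<in>UNIV. \<Sum>k\<in>UNIV. aw E i j * (u i $ k * u j $ k))"
    by (simp add: inner_vec_def sum_distrib_left)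
  also have "\<dots> = (\<Sum>i\<in>UNIV. \<Sum>k\<in>UNIV. \<Sum>j\<in>UNIV. aw E i j * (u i $ k * u j $ k))"
    by (rule sum.cong[OF refl], rule sum.swap)
  also have "\<dots> = (\<Sum>k\<in>UNIV. \<Sum>i\<in>UNIV. \<Sum>j\<in>UNIV. aw E i j * (u i $ k * u j $ k))"
    by (rule sum.swap)
  also have "\<dots> = (\<Sum>k\<in>UNIV. Qf E (y k))" by (simp add: Qf_def y_def)
  also have "\<dots> \<ge> (\<Sum>k\<in>UNIV. m * (norm (y k))^2)" by (intro sum_mono mn)
  finally have 1: "(\<Sum>k\<in>UNIV. m * (norm (y k))^2) \<le> (\<Sum>i\<in>UNIV. \<Sum>j\<in>UNIV. aw E i j * (u i \<bullet> u j))" .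
  have "(\<Sum>k\<in>UNIV. (norm (y k))^2) = (\<Sum>k\<in>UNIV. \<Sum>i\<in>UNIV. (u i $ k)^2)" by (simp add: norm_sq y_def)
  also have "\<dots> = (\<Sum>i\<in>UNIV. \<Sum>k\<in>UNIV. (u i $ k)^2)" by (rule sum.swap)
  also have "\<dots> = (\<Sum>i\<in>(UNIV::'a set). 1)" by (simp add: norm_sq[symmetric] nu)
  finally have 2: "(\<Sum>k\<in>UNIV. (norm (y k))^2) = CARD('a)" by simp
  have "(\<Sum>i\<in>UNIV. \<Sum>j\<in>UNIV. aw E i j * (u i \<bullet> u j)) \<le> (\<Sum>i\<in>UNIV. \<Sum>j\<in>UNIV. aw E i j * ?w)"
    by (intro sum_mono) (use ed in \<open>auto simp: aw_def\<close>)
  also have "\<dots> = (\<Sum>i\<in>(UNIV::'a set). real d * ?w)"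
  proof (rule sum.cong[OF refl])
    fix i :: 'a
    have "(\<Sum>j\<in>UNIV. aw E i j * ?w) = (\<Sum>j\<in>UNIV. aw E i j) * ?w" by (rule sum_distrib_right[symmetric])
    then show "(\<Sum>j\<in>UNIV. aw E i j * ?w) = real d * ?w" by (simp only: sum_aw reg)
  qed
  also have "\<dots> = ?w * (CARD('a) * real d)" by simp
  finally have 3: "(\<Sum>i\<in>UNIV. \<Sum>j\<in>UNIV. aw E i j * (u i \<bullet> u j)) \<le> ?w * (CARD('a) * real d)" .
  have "m * CARD('a) = (\<Sum>k\<in>UNIV. m * (norm (y k))^2)" by (simp add: sum_distrib_left[symmetric] 2)
  then show ?thesis using 1 3 by linarith
qed



definition Wv :: "('a::finite \<Rightarrow> 'a \<Rightarrow> bool) \<Rightarrow> real^'a \<Rightarrow> 'a \<Rightarrow> real^('a \<Rightarrow> 'a)" where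
  "Wv E x i = (\<chi> f. if graph_aut E f then x $ (f i) else 0)"

definition Mg :: "('a::finite \<Rightarrow> 'a \<Rightarrow> bool) \<Rightarrow> real^'a \<Rightarrow> 'a \<Rightarrow> 'a \<Rightarrow> real" where
  "Mg E x i j = (\<Sum>f\<in>UNIV. if graph_aut E f then x $ (f i) * x $ (f j) else 0)"

lemma Wv_inner: "Wv E x i \<bullet> Wv E x j = Mg E x i j"
  unfolding Wv_def Mg_def inner_vec_def by (intro sum.cong) auto

lemma Mg_sym: "Mg E x i j = Mg E x j i"
  unfolding Mg_def by (intro sum.cong) auto

lemma aut_comp: "graph_aut E f \<Longrightarrow> graph_aut E g \<Longrightarrow> graph_aut E (f \<circ> g)"
  unfolding graph_aut_def by (auto intro: bij_comp)

lemma aut_inv: assumes "graph_aut E g" shows "graph_aut E (inv g)"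
proof -
  have b: "bij g" and e: "\<And>x y. E x y \<longleftrightarrow> E (g x) (g y)" using assms unfolding graph_aut_def by auto
  have s: "\<And>x. g (inv g x) = x" using surj_f_inv_f[OF bij_is_surj[OF b]] .
  have "E x y \<longleftrightarrow> E (inv g x) (inv g y)" for x y using e[of "inv g x" "inv g y"] s by simp
  then show ?thesis unfolding graph_aut_def using bij_imp_bij_inv[OF b] by blast
qed

lemma aut_id: "graph_aut E id"
  unfolding graph_aut_def by simp

lemma sum_comp_bij:
  fixes h :: "('a::finite \<Rightarrow> 'b::finite) \<Rightarrow> real" and g :: "'a \<Rightarrow> 'a"
  assumes b: "bij g"
  shows "(\<Sum>f\<in>UNIV. h (f \<circ> g)) = (\<Sum>f\<in>UNIV. h f)"
proof (rule sum.reindex_bij_witness[of UNIV "\<lambda>f. f \<circ> inv g" "\<lambda>f. f \<circ> g"])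
  have 1: "g \<circ> inv g = id" using b bij_is_surj surj_iff by blast
  have 2: "inv g \<circ> g = id" using b bij_is_inj inj_iff by blast
  fix f :: "'a \<Rightarrow> 'b"
  show "f \<circ> g \<circ> inv g = f" using 1 by (simp add: o_assoc[symmetric])
  show "f \<circ> inv g \<circ> g = f" using 2 by (simp add: o_assoc[symmetric])
qed auto

lemma sum_bij: "bij f \<Longrightarrow> (\<Sum>i\<in>UNIV. h (f i)) = (\<Sum>i\<in>UNIV. h i)"
  by (rule sum.reindex_bij_betw)

lemma Mg_aut:
  assumes g: "graph_aut E g"
  shows "Mg E x (g i) (g j) = Mg E x i j"
proof -
  define h where "h f = (if graph_aut E f then x $ (f i) * x $ (f j) else 0)" for f
  have b: "bij g" using g unfolding graph_aut_def by auto
  have ag: "graph_aut E (f \<circ> g) \<longleftrightarrow> graph_aut E f" for f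
  proof
    assume "graph_aut E (f \<circ> g)"
    then have "graph_aut E (f \<circ> g \<circ> inv g)" using aut_comp aut_inv[OF g] by blast
    moreover have "f \<circ> g \<circ> inv g = f"
      using b bij_is_surj surj_iff by (metis comp_id o_assoc)
    ultimately show "graph_aut E f" by simp
  qed (rule aut_comp[OF _ g])
  have "Mg E x (g i) (g j) = (\<Sum>f\<in>UNIV. h (f \<circ> g))"
    unfolding Mg_def h_def by (intro sum.cong refl) (simp only: ag o_apply)
  also have "\<dots> = (\<Sum>f\<in>UNIV. h f)" by (rule sum_comp_bij[OF b])
  also have "\<dots> = Mg E x i j" unfolding Mg_def h_def ..
  finally show ?thesis .
qed

lemma Mg_diag:
  fixes x :: "real^'a::finite"
  assumes n1: "norm x = 1"
  shows "(\<Sum>i\<in>UNIV. Mg E x i i) = (\<Sum>f\<in>UNIV. if graph_aut E f then 1 else 0)"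
proof -
  have "(\<Sum>i\<in>UNIV. Mg E x i i) = (\<Sum>f\<in>UNIV. \<Sum>i\<in>UNIV. if graph_aut E f then x $ (f i) * x $ (f i) else 0)"
    unfolding Mg_def by (rule sum.swap)
  also have "\<dots> = (\<Sum>f\<in>UNIV. if graph_aut E f then 1 else 0)"
  proof (rule sum.cong[OF refl])
    fix f :: "'a \<Rightarrow> 'a"
    show "(\<Sum>i\<in>UNIV. if graph_aut E f then x $ (f i) * x $ (f i) else 0) = (if graph_aut E f then 1 else 0)"
    proof (cases "graph_aut E f")
      case True
      then have b: "bij f" unfolding graph_aut_def by auto
      have "(\<Sum>i\<in>UNIV. x $ (f i) * x $ (f i)) = (\<Sum>i\<in>UNIV. x $ i * x $ i)"
        by (rule sum_bij[OF b, of "\<lambda>k. x $ k * x $ k"])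
      also have "\<dots> = 1" using n1 norm_sq[of x] by (simp add: power2_eq_square)
      finally show ?thesis using True by simp
    qed simp
  qed
  finally show ?thesis .
qed

lemma Mg_edge:
  fixes x :: "real^'a::finite"
  shows "(\<Sum>i\<in>UNIV. \<Sum>j\<in>UNIV. aw E i j * Mg E x i j) = Qf E x * (\<Sum>f\<in>UNIV. if graph_aut E f then 1 else 0)"
proof -
  have "(\<Sum>i\<in>UNIV. \<Sum>j\<in>UNIV. aw E i j * Mg E x i j)
      = (\<Sum>i\<in>UNIV. \<Sum>j\<in>UNIV. \<Sum>f\<in>UNIV. if graph_aut E f then aw E i j * (x $ (f i) * x $ (f j)) else 0)"
    unfolding Mg_def by (simp add: sum_distrib_left if_distrib cong: if_cong)
  also have "\<dots> = (\<Sum>i\<in>UNIV. \<Sum>f\<in>UNIV. \<Sum>j\<in>UNIV. if graph_aut E f then aw E i j * (x $ (f i) * x $ (f j)) else 0)"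
    by (rule sum.cong[OF refl], rule sum.swap)
  also have "\<dots> = (\<Sum>f\<in>UNIV. \<Sum>i\<in>UNIV. \<Sum>j\<in>UNIV. if graph_aut E f then aw E i j * (x $ (f i) * x $ (f j)) else 0)"
    by (rule sum.swap)
  also have "\<dots> = (\<Sum>f\<in>UNIV. Qf E x * (if graph_aut E f then 1 else 0))"
  proof (rule sum.cong[OF refl])
    fix f :: "'a \<Rightarrow> 'a"
    show "(\<Sum>i\<in>UNIV. \<Sum>j\<in>UNIV. if graph_aut E f then aw E i j * (x $ (f i) * x $ (f j)) else 0) = Qf E x * (if graph_aut E f then 1 else 0)"
    proof (cases "graph_aut E f")
      case True
      then have b: "bij f" and e: "\<And>i j. E i j \<longleftrightarrow> E (f i) (f j)" unfolding graph_aut_def by auto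
      have "(\<Sum>i\<in>UNIV. \<Sum>j\<in>UNIV. aw E i j * (x $ (f i) * x $ (f j)))
          = (\<Sum>i\<in>UNIV. \<Sum>j\<in>UNIV. aw E (f i) (f j) * (x $ (f i) * x $ (f j)))"
        using e by (simp add: aw_def)
      also have "\<dots> = (\<Sum>i\<in>UNIV. \<Sum>k\<in>UNIV. aw E (f i) k * (x $ (f i) * x $ k))"
        by (rule sum.cong[OF refl], rule sum_bij[OF b, of "\<lambda>k. aw E (f _) k * (x $ (f _) * x $ k)"])
      also have "\<dots> = (\<Sum>l\<in>UNIV. \<Sum>k\<in>UNIV. aw E l k * (x $ l * x $ k))"
        by (rule sum_bij[OF b, of "\<lambda>l. \<Sum>k\<in>UNIV. aw E l k * (x $ l * x $ k)"])
      also have "\<dots> = Qf E x" unfolding Qf_def ..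
      finally show ?thesis using True by simp
    qed simp
  qed
  also have "\<dots> = Qf E x * (\<Sum>f\<in>UNIV. if graph_aut E f then 1 else 0)"
    by (simp add: sum_distrib_left)
  finally show ?thesis .
qed



lemma isometry_inner:
  assumes "linear f" "\<And>x. x \<in> S \<Longrightarrow> norm (f x) = norm x" "subspace S" "p \<in> S" "q \<in> S"
  shows "f p \<bullet> f q = p \<bullet> q"
proof -
  have "f p - f q = f (p - q)" using assms(1) by (simp add: linear_diff)
  moreover have "p - q \<in> S" using assms(3-5) by (simp add: subspace_diff)
  ultimately have "norm (f p - f q) = norm (p - q)" using assms(2) by simp
  then show ?thesis using assms(2)[OF assms(4)] assms(2)[OF assms(5)] by (simp add: dot_norm_neg)
qed

lemma upper:
  fixes E :: "'a::finite \<Rightarrow> 'a \<Rightarrow> bool" and x0 :: "real^'a"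
  assumes sg: "simple_graph E" and vt: "vertex_transitive E" and et: "edge_transitive E"
    and ab: "E a b" and reg: "\<And>i. card {j. E i j} = d" and d1: "d \<ge> 1"
    and n1: "norm x0 = 1" and mneg: "Qf E x0 < 0"
  shows "\<exists>u. strict_vector_coloring E (1 - real d / Qf E x0) u"
proof -
  let ?M = "Mg E x0" and ?m = "Qf E x0"
  define N :: real where "N = (\<Sum>f\<in>UNIV. if graph_aut E f then 1 else 0)"
  have N1: "N \<ge> 1"
  proof -
    have "(\<lambda>f. if graph_aut E f then 1 else 0 :: real) id \<le> N"
      unfolding N_def by (rule member_le_sum) auto
    then show ?thesis using aut_id[of E] by simp
  qed
  define \<alpha> where "\<alpha> = ?M a a"
  have diag: "?M i i = \<alpha>" for i
  proof -
    obtain g where g: "graph_aut E g" "g a = i" using vt unfolding vertex_transitive_def by blast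
    show ?thesis using Mg_aut[OF g(1), of x0 a a] g(2) by (simp add: \<alpha>_def)
  qed
  have "N = (\<Sum>i\<in>(UNIV::'a set). \<alpha>)" unfolding N_def Mg_diag[OF n1, symmetric] diag ..
  then have Na: "N = CARD('a) * \<alpha>" by simp
  have cpos: "real CARD('a) > 0" by simp
  have "0 < real CARD('a) * \<alpha>" using Na N1 by simp
  then have apos: "\<alpha> > 0" using zero_less_mult_pos cpos by blast
  define c where "c = ?M a b"
  have edge: "?M i j = c" if eij: "E i j" for i j
  proof -
    obtain g where g: "graph_aut E g" "{g a, g b} = {i, j}" using et ab eij unfolding edge_transitive_def by blast
    from g(2) have "(g a = i \<and> g b = j) \<or> (g a = j \<and> g b = i)" by (auto simp: doubleton_eq_iff)
    then show ?thesis using Mg_aut[OF g(1), of x0 a b] Mg_sym[of E x0] unfolding c_def by auto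
  qed
  have "(\<Sum>i\<in>UNIV. \<Sum>j\<in>UNIV. aw E i j * ?M i j) = (\<Sum>i\<in>UNIV. \<Sum>j\<in>UNIV. aw E i j * c)"
    by (intro sum.cong refl) (auto simp: aw_def edge)
  also have "\<dots> = (\<Sum>i\<in>(UNIV::'a set). real d * c)"
  proof (rule sum.cong[OF refl])
    fix i :: 'a
    have "(\<Sum>j\<in>UNIV. aw E i j * c) = (\<Sum>j\<in>UNIV. aw E i j) * c" by (rule sum_distrib_right[symmetric])
    then show "(\<Sum>j\<in>UNIV. aw E i j * c) = real d * c" by (simp only: sum_aw reg)
  qed
  finally have "CARD('a) * (real d * c) = ?m * N" using Mg_edge[of E x0] unfolding N_def by simp
  then have "CARD('a) * (real d * c) = CARD('a) * (?m * \<alpha>)" unfolding Na by (simp add: algebra_simps)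
  then have dc: "real d * c = ?m * \<alpha>" using cpos by simp
  define w where "w = Wv E x0"
  define S where "S = span (range w)"
  have "dim S \<le> card (range w)" unfolding S_def by (rule dim_le_card) auto
  also have "\<dots> \<le> CARD('a)" by (rule card_image_le) simp
  also have "\<dots> = dim (UNIV :: (real^'a) set)" by simp
  finally have dS: "dim S \<le> dim (UNIV :: (real^'a) set)" .
  obtain \<phi> :: "real^('a\<Rightarrow>'a) \<Rightarrow> real^'a" where phi: "linear \<phi>" "\<And>x. x \<in> S \<Longrightarrow> norm (\<phi> x) = norm x"
    using isometry_subset_subspace[OF _ subspace_UNIV dS] unfolding S_def by (metis subspace_span)
  have wS: "w i \<in> S" for i unfolding S_def by (simp add: span_base)
  have sub: "subspace S" unfolding S_def by simp
  define u where "u i = (1 / sqrt \<alpha>) *\<^sub>R \<phi> (w i)" for i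
  have uu: "u i \<bullet> u j = ?M i j / \<alpha>" for i j
  proof -
    have "u i \<bullet> u j = (1 / sqrt \<alpha>) * (1 / sqrt \<alpha>) * (\<phi> (w i) \<bullet> \<phi> (w j))" by (simp add: u_def)
    also have "\<phi> (w i) \<bullet> \<phi> (w j) = ?M i j"
      using isometry_inner[OF phi sub wS wS] by (simp add: w_def Wv_inner)
    finally show ?thesis using apos by (simp add: field_simps)
  qed
  have "norm (u i) = 1" for i
    using uu[of i i] diag[of i] apos by (simp add: norm_eq_sqrt_inner)
  moreover have "u i \<bullet> u j = - 1 / ((1 - real d / ?m) - 1)" if "E i j" for i j
  proof -
    have "u i \<bullet> u j = c / \<alpha>" using uu edge[OF that] by simp
    also have "\<dots> = ?m / real d" using dc apos d1 by (simp add: field_simps)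
    also have "\<dots> = - 1 / ((1 - real d / ?m) - 1)" using mneg d1 by (simp add: field_simps)
    finally show ?thesis .
  qed
  ultimately show ?thesis unfolding strict_vector_coloring_def by blast
qed



lemma lb_arith:
  fixes m t d n :: real
  assumes "m * n \<le> (- 1 / (t - 1)) * (n * d)" "n > 0" "t \<ge> 2" "m < 0"
  shows "1 - d / m \<le> t"
proof -
  have "(- 1 / (t - 1)) * (n * d) = ((- 1 / (t - 1)) * d) * n" by (simp add: algebra_simps)
  then have "m * n \<le> ((- 1 / (t - 1)) * d) * n" using assms(1) by (simp only:)
  then have "m \<le> (- 1 / (t - 1)) * d" using assms(2) by (rule mult_right_le_imp_le)
  then have "m * (t - 1) \<le> - d" using assms(3) by (simp add: field_simps)
  then have "d \<le> (1 - t) * m" by (simp add: algebra_simps)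
  then have "d / m \<ge> 1 - t" using assms(4) by (simp add: pos_le_divide_eq neg_le_divide_eq)
  then show ?thesis by simp
qed

theorem mainTheorem12:
  fixes E :: "'a::finite \<Rightarrow> 'a \<Rightarrow> bool"
  assumes "simple_graph E"
    and "\<exists>x y. E x y"
    and "vertex_transitive E"
    and "edge_transitive E"
  shows "vector_chromatic E = 1 - lambda_max E / lambda_min E
       \<and> strict_vector_chromatic E = 1 - lambda_max E / lambda_min E"
proof -
  note sg = assms(1) and vt = assms(3) and et = assms(4)
  obtain d x0 where reg: "\<And>i. card {j. E i j} = d" and d1: "d \<ge> 1" and n1: "norm x0 = 1"
    and mn: "\<And>x. Qf E x \<ge> Qf E x0 * (norm x)^2"
    and lmin: "lambda_min E = Qf E x0" and lmax: "lambda_max E = real d"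
    and m1: "Qf E x0 \<le> -1" and md: "Qf E x0 \<ge> - real d"
    using spectral[OF sg assms(2) vt] by blast
  obtain a b where ab: "E a b" using assms(2) by blast
  let ?m = "Qf E x0"
  let ?T = "1 - real d / ?m"
  have mneg: "?m < 0" using m1 by simp
  have T2: "?T \<ge> 2"
  proof -
    have "real d \<ge> - ?m" using md by simp
    then have "real d / ?m \<le> -1" using mneg by (simp add: divide_le_eq)
    then show ?thesis by simp
  qed
  obtain u where u: "strict_vector_coloring E ?T u"
    using upper[OF sg vt et ab reg d1 n1 mneg] by blast
  have uv: "vector_coloring E ?T u" using u unfolding strict_vector_coloring_def vector_coloring_def by simp
  have low: "?T \<le> t" if "t \<ge> 2" "vector_coloring E t v" for t v
    using lb_arith[OF lower_bound[OF reg mn that(2)] _ that(1) mneg] by simp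
  have "vector_chromatic E = ?T"
    unfolding vector_chromatic_def
    by (rule cInf_eq_minimum) (use T2 uv low in auto)
  moreover have "strict_vector_chromatic E = ?T"
    unfolding strict_vector_chromatic_def
  proof (rule cInf_eq_minimum)
    show "?T \<in> {t. t \<ge> 2 \<and> (\<exists>u. strict_vector_coloring E t u)}" using T2 u by blast
    fix y assume "y \<in> {t. t \<ge> 2 \<and> (\<exists>u. strict_vector_coloring E t u)}"
    then obtain v where "y \<ge> 2" "strict_vector_coloring E y v" by blast
    moreover then have "vector_coloring E y v" unfolding strict_vector_coloring_def vector_coloring_def by simp
    ultimately show "?T \<le> y" using low by blast
  qed
  ultimately show ?thesis unfolding lmin lmax by simp
qed

end
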